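(* In the biased planner's myopic problem described in the context, for every $b\in[0,1-p)$, $\pi^0_B(b)\in\{p,1-b\}$.
   Context: A binary state $\omega\in\{G,B\}$; for an agent with public belief $b$ and private signal precision $q\in[0.5,1]$ (signal matches $\omega$ with probability $q$), the action is the signal if $1-q\le b\le q$, $G$ if $b>q$, $B$ if $b<1-q$. Let $z(b,q)=b+q-2bq$. The biased planner has baseline precision $p\in[0.5,1)$, cost $\beta:[0,1]\to[0,\infty)$ non-negative, increasing, continuous, concave with $\beta(0)=0$, and $C>0$; its instantaneous reward is $r_B(b,q)=-\beta(|q-p|)-Cz(b,q)$ if $q\ge\max(b,1-b)$, $-\beta(|q-p|)-C$ if $b<1-q$, and $-\beta(|q-p|)$ if $b>q$. The myopic optimal precision $\pi^0_B(b)$ is a maximizer of $q\mapsto r_B(b,q)$ over $[0.5,1]$. *)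

theory Defs
  imports "HOL-Analysis.Analysis"
begin

definition zfun :: "real \<Rightarrow> real \<Rightarrow> real" where
  "zfun b q = b + q - 2 * b * q"

definition rB :: "real \<Rightarrow> (real \<Rightarrow> real) \<Rightarrow> real \<Rightarrow> real \<Rightarrow> real \<Rightarrow> real" where
  "rB p beta C b q =
     (if q \<ge> max b (1 - b) then - beta \<bar>q - p\<bar> - C * zfun b q
      else if b < 1 - q then - beta \<bar>q - p\<bar> - C
      else - beta \<bar>q - p\<bar>)"

definition myopic_opt :: "real \<Rightarrow> (real \<Rightarrow> real) \<Rightarrow> real \<Rightarrow> real \<Rightarrow> real \<Rightarrow> bool" where
  "myopic_opt p beta C b q \<longleftrightarrow>
     q \<in> {1/2..1} \<and> (\<forall>q'\<in>{1/2..1}. rB p beta C b q' \<le> rB p beta C b q)"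

end

theory Submission
  imports Defs
begin

theorem lemma11:
  fixes p C b q :: real and beta :: "real \<Rightarrow> real"
  assumes hp: "1/2 \<le> p" "p < 1"
    and hbeta_nonneg: "\<forall>x\<in>{0..1}. 0 \<le> beta x"
    and hbeta_mono: "strict_mono_on {0..1} beta"
    and hbeta_cont: "continuous_on {0..1} beta"
    and hbeta_conc: "concave_on {0..1} beta"
    and hbeta0: "beta 0 = 0"
    and hC: "C > 0"
    and hb: "0 \<le> b" "b < 1 - p"
    and hopt: "myopic_opt p beta C b q"
  shows "q \<in> {p, 1 - b}"
proof (rule ccontr)
  assume nq: "q \<notin> {p, 1 - b}"
  have q1: "1/2 \<le> q" "q \<le> 1" and opt: "\<forall>q'\<in>{1/2..1}. rB p beta C b q' \<le> rB p beta C b q"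
    using hopt unfolding myopic_opt_def by auto
  have mx: "max b (1 - b) = 1 - b" using hb hp by auto
  show False
  proof (cases "q < 1 - b")
    case True
    have rq: "rB p beta C b q = - beta \<bar>q - p\<bar> - C" using True mx unfolding rB_def by auto
    have rp: "rB p beta C b p = - beta 0 - C" using hb mx unfolding rB_def by auto
    have "beta 0 < beta \<bar>q - p\<bar>"
      using hbeta_mono nq q1 hp unfolding strict_mono_on_def by auto
    moreover have "rB p beta C b p \<le> rB p beta C b q" using opt hp by auto
    ultimately show False using rq rp by auto
  next
    case False
    then have gt: "q > 1 - b" using nq by auto
    have rq: "rB p beta C b q = - beta (q - p) - C * zfun b q" using gt mx hb hp unfolding rB_def by auto
    have r1: "rB p beta C b (1 - b) = - beta (1 - b - p) - C * zfun b (1 - b)"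
      using hb hp mx unfolding rB_def by auto
    have "beta (1 - b - p) < beta (q - p)"
      using hbeta_mono gt q1 hp hb unfolding strict_mono_on_def by auto
    moreover have "zfun b (1 - b) \<le> zfun b q"
    proof -
      have "(1 - b) * (1 - 2*b) \<le> q * (1 - 2*b)"
        using gt hb hp by (intro mult_right_mono) auto
      then show ?thesis unfolding zfun_def by (simp add: algebra_simps)
    qed
    moreover have "rB p beta C b (1 - b) \<le> rB p beta C b q" using opt hb hp by auto
    ultimately show False using rq r1 hC
      by (smt (verit) mult_left_mono)
  qed
qed

end
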